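(* $V(D_k)\le S\cdot LIN(D_k)\le S\cdot OPT(D_k)\le S\cdot LIN(D_k)+\frac{S\,(m(D_k)+k)}{2}$.
   Context: Let $S>0$, let $D$ be a finite multiset of items with sizes in $(0,S]$ and $k\ge1$ an integer. $D_k$ is the collection of $k$ copies of each item of $D$; $V(D_k)$ is its total size. A $k$-times bin packing assigns all copies to bins with total size at most $S$ per bin and no two copies of the same item in one bin; $OPT(D_k)$ is the minimum number of bins. Let $c[1],\dots,c[m]$ be the distinct item sizes of $D$, $m(D_k)=m(D)=m$, $n[i]$ the number of items of size $c[i]$, $\mathbf{n}=(n[1],\dots,n[m])$. A configuration is a vector $a\in\mathbb{Z}^m_{\ge0}$ with $a_i\le n[i]$ and $\sum_ia_ic[i]\le S$; $A$ is the $m\times t$ matrix whose columns are all configurations. $LIN(D_k)$ is the optimal value of the linear program: minimize $\mathbf{1}\cdot\mathbf{x}$ subject to $A\mathbf{x}=k\mathbf{n}$, $\mathbf{x}\in\mathbb{R}^t_{\ge0}$. *)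

theory Defs
  imports Main "HOL-Library.Multiset" Complex_Main
begin

text \<open>The finite multiset D of items is given as a list ds of item sizes;
 item i (for i < length ds) has size ds ! i, and D = mset ds.
 Copies of items in D_k are the pairs (i, j) with i < length ds, j < k.\<close>

definition total_size :: "real list \<Rightarrow> nat \<Rightarrow> real" where
  "total_size ds k = real k * sum_list ds"

text \<open>A k-times bin packing of ds into N bins (numbered 0..N-1) with capacity S:
 f i j is the bin of copy j of item i.\<close>
definition is_k_packing :: "real \<Rightarrow> real list \<Rightarrow> nat \<Rightarrow> nat \<Rightarrow> (nat \<Rightarrow> nat \<Rightarrow> nat) \<Rightarrow> bool" where
  "is_k_packing S ds k N f \<longleftrightarrow>
     (\<forall>i<length ds. \<forall>j<k. f i j < N) \<and>
     (\<forall>i<length ds. \<forall>j<k. \<forall>j'<k. j \<noteq> j' \<longrightarrow> f i j \<noteq> f i j') \<and>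
     (\<forall>b<N. (\<Sum>p\<in>{(i, j). i < length ds \<and> j < k \<and> f i j = b}. ds ! fst p) \<le> S)"

definition OPT :: "real \<Rightarrow> real list \<Rightarrow> nat \<Rightarrow> nat" where
  "OPT S ds k = (LEAST N. \<exists>f. is_k_packing S ds k N f)"

text \<open>Distinct item sizes c[0..m-1] (in increasing order) and multiplicities n[i].\<close>
definition sizes :: "real list \<Rightarrow> real list" where
  "sizes ds = sorted_list_of_set (set ds)"

definition m_of :: "real list \<Rightarrow> nat" where
  "m_of ds = length (sizes ds)"

definition mult :: "real list \<Rightarrow> nat \<Rightarrow> nat" where
  "mult ds i = count (mset ds) (sizes ds ! i)"

definition configs :: "real \<Rightarrow> real list \<Rightarrow> (nat \<Rightarrow> nat) set" where
  "configs S ds = {a. (\<forall>i<m_of ds. a i \<le> mult ds i) \<and> (\<forall>i\<ge>m_of ds. a i = 0) \<and>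
       (\<Sum>i<m_of ds. real (a i) * sizes ds ! i) \<le> S}"

definition lp_feasible :: "real \<Rightarrow> real list \<Rightarrow> nat \<Rightarrow> ((nat \<Rightarrow> nat) \<Rightarrow> real) \<Rightarrow> bool" where
  "lp_feasible S ds k x \<longleftrightarrow>
     (\<forall>a\<in>configs S ds. x a \<ge> 0) \<and>
     (\<forall>i<m_of ds. (\<Sum>a\<in>configs S ds. real (a i) * x a) = real k * real (mult ds i))"

definition LIN :: "real \<Rightarrow> real list \<Rightarrow> nat \<Rightarrow> real" where
  "LIN S ds k = Inf {(\<Sum>a\<in>configs S ds. x a) | x. lp_feasible S ds k x}"

end

theory Submission
  imports Defs
begin


lemma sizes_set[simp]: "set (sizes ds) = set ds"
  unfolding sizes_def by simp
lemma sizes_distinct[simp]: "distinct (sizes ds)"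
  unfolding sizes_def by simp

definition cls :: "real list \<Rightarrow> nat \<Rightarrow> nat" where
  "cls ds i' = (THE i. i < m_of ds \<and> sizes ds ! i = ds ! i')"

lemma cls: assumes "i' < length ds"
  shows "cls ds i' < m_of ds \<and> sizes ds ! cls ds i' = ds ! i'"
proof -
  have "ds ! i' \<in> set (sizes ds)" using assms by simp
  then obtain i where i: "i < m_of ds" "sizes ds ! i = ds ! i'"
    using in_set_conv_nth[of "ds ! i'" "sizes ds"] unfolding m_of_def by blast
  have uniq: "j = i" if "j < m_of ds" "sizes ds ! j = ds ! i'" for j
  proof -
    have "sizes ds ! j = sizes ds ! i" using that i by simp
    then show ?thesis using nth_eq_iff_index_eq[OF sizes_distinct, of j ds i] that(1) i(1)
      unfolding m_of_def by simp
  qed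
  have "cls ds i' = i" unfolding cls_def by (rule the_equality) (use i uniq in blast)+
  then show ?thesis using i by simp
qed

lemma cls_iff: assumes "i' < length ds" "i < m_of ds"
  shows "cls ds i' = i \<longleftrightarrow> sizes ds ! i = ds ! i'"
proof -
  have c: "cls ds i' < m_of ds" "sizes ds ! cls ds i' = ds ! i'" using cls[OF assms(1)] by auto
  show ?thesis
  proof
    assume "cls ds i' = i" then show "sizes ds ! i = ds ! i'" using c by simp
  next
    assume "sizes ds ! i = ds ! i'"
    then have "sizes ds ! i = sizes ds ! cls ds i'" using c by simp
    then show "cls ds i' = i" using nth_eq_iff_index_eq[OF sizes_distinct, of i ds "cls ds i'"] c assms(2)
      unfolding m_of_def by simp
  qed
qed

lemma mult_card: "mult ds i = card {i'. i' < length ds \<and> ds ! i' = sizes ds ! i}"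
proof -
  have "count_list xs x = length (filter (\<lambda>y. y = x) xs)" for xs :: "real list" and x
    by (induction xs) auto
  then show ?thesis unfolding mult_def count_mset
    by (simp add: length_filter_conv_card)
qed

lemma configs_finite: "finite (configs S ds)"
proof -
  let ?B = "{0..Max ({0} \<union> mult ds ` {..<m_of ds})}"
  have "a \<in> {f. \<forall>x. (x \<in> {..<m_of ds} \<longrightarrow> f x \<in> ?B) \<and> (x \<notin> {..<m_of ds} \<longrightarrow> f x = 0)}"
    if a: "a \<in> configs S ds" for a
  proof -
    have "a x \<in> ?B" if "x < m_of ds" for x
    proof -
      have "a x \<le> mult ds x" "mult ds x \<le> Max ({0} \<union> mult ds ` {..<m_of ds})"
        using a that unfolding configs_def by auto
      then show ?thesis by simp
    qed
    moreover have "a x = 0" if "\<not> x < m_of ds" for x using a that unfolding configs_def by auto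
    ultimately show ?thesis by auto
  qed
  then have "configs S ds \<subseteq> {f. \<forall>x. (x \<in> {..<m_of ds} \<longrightarrow> f x \<in> ?B) \<and> (x \<notin> {..<m_of ds} \<longrightarrow> f x = 0)}"
    by blast
  then show ?thesis by (rule finite_subset) (intro finite_set_of_finite_funs; simp)
qed

lemma sum_list_classes: "sum_list ds = (\<Sum>i<m_of ds. real (mult ds i) * sizes ds ! i)"
proof -
  have "sum_list ds = (\<Sum>i'<length ds. ds ! i')" by (simp add: sum_list_sum_nth atLeast0LessThan)
  also have "\<dots> = (\<Sum>i<m_of ds. \<Sum>i'\<in>{i'\<in>{..<length ds}. cls ds i' = i}. ds ! i')"
    by (rule sum.group[symmetric]) (auto simp: cls)
  also have "\<dots> = (\<Sum>i<m_of ds. real (mult ds i) * sizes ds ! i)"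
  proof (rule sum.cong[OF refl])
    fix i assume i: "i \<in> {..<m_of ds}"
    have e: "{i'\<in>{..<length ds}. cls ds i' = i} = {i'. i' < length ds \<and> ds ! i' = sizes ds ! i}"
    proof (rule set_eqI, rule iffI)
      fix x assume "x \<in> {i'\<in>{..<length ds}. cls ds i' = i}" then show "x \<in> {i'. i' < length ds \<and> ds ! i' = sizes ds ! i}"
        using cls[of x ds] by auto
    next
      fix x assume "x \<in> {i'. i' < length ds \<and> ds ! i' = sizes ds ! i}" then show "x \<in> {i'\<in>{..<length ds}. cls ds i' = i}"
        using cls_iff[of x ds i] i by auto
    qed
    have "(\<Sum>i'\<in>{i'\<in>{..<length ds}. cls ds i' = i}. ds ! i') = (\<Sum>i'\<in>{i'. i' < length ds \<and> ds ! i' = sizes ds ! i}. sizes ds ! i)"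
      unfolding e by (rule sum.cong) auto
    then show "(\<Sum>i'\<in>{i'\<in>{..<length ds}. cls ds i' = i}. ds ! i') = real (mult ds i) * sizes ds ! i"
      by (simp add: mult_card)
  qed
  finally show ?thesis .
qed



definition rank :: "real list \<Rightarrow> nat \<Rightarrow> nat" where
  "rank ds i' = card {i''. i'' < i' \<and> ds ! i'' = ds ! i'}"

definition cum :: "(nat \<Rightarrow> nat) list \<Rightarrow> nat \<Rightarrow> nat \<Rightarrow> nat" where
  "cum bs i \<beta> = sum_list (map (\<lambda>b. b i) (take \<beta> bs))"

definition slot :: "real list \<Rightarrow> nat \<Rightarrow> nat \<Rightarrow> nat" where
  "slot ds i' j = j * mult ds (cls ds i') + rank ds i'"

definition packf :: "real list \<Rightarrow> (nat \<Rightarrow> nat) list \<Rightarrow> nat \<Rightarrow> nat \<Rightarrow> nat" where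
  "packf ds bs i' j = (LEAST \<beta>. slot ds i' j < cum bs (cls ds i') (Suc \<beta>))"

lemma rank_less: assumes "i' < length ds" shows "rank ds i' < mult ds (cls ds i')"
proof -
  have e: "sizes ds ! cls ds i' = ds ! i'" using cls[OF assms] by simp
  have "{i''. i'' < i' \<and> ds ! i'' = ds ! i'} \<subset> {i''. i'' < length ds \<and> ds ! i'' = ds ! i'}"
    using assms by auto
  then have "card {i''. i'' < i' \<and> ds ! i'' = ds ! i'} < card {i''. i'' < length ds \<and> ds ! i'' = ds ! i'}"
    by (intro psubset_card_mono) auto
  then show ?thesis unfolding rank_def mult_card e .
qed

lemma rank_lt: assumes "i1 < i2" "ds ! i1 = ds ! i2" shows "rank ds i1 < rank ds i2"
proof -
  have "{i''. i'' < i1 \<and> ds ! i'' = ds ! i1} \<subset> {i''. i'' < i2 \<and> ds ! i'' = ds ! i2}"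
    using assms by auto
  then show ?thesis unfolding rank_def by (intro psubset_card_mono) auto
qed

lemma rank_inj: assumes "ds ! i1 = ds ! i2" "rank ds i1 = rank ds i2" shows "i1 = i2"
  by (cases i1 i2 rule: linorder_cases) (use rank_lt[of i1 i2 ds] rank_lt[of i2 i1 ds] assms in auto)

lemma cls_eq: assumes "i1 < length ds" "i2 < length ds"
  shows "cls ds i1 = cls ds i2 \<longleftrightarrow> ds ! i1 = ds ! i2"
proof
  assume "cls ds i1 = cls ds i2" then show "ds ! i1 = ds ! i2"
    using cls[OF assms(1)] cls[OF assms(2)] by simp
next
  assume h: "ds ! i1 = ds ! i2"
  have "sizes ds ! cls ds i2 = ds ! i1" using cls[OF assms(2)] h by simp
  then show "cls ds i1 = cls ds i2" using cls_iff[OF assms(1), of "cls ds i2"] cls[OF assms(2)] by simp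
qed

lemma slot_inj: assumes "i1 < length ds" "i2 < length ds" "cls ds i1 = cls ds i2"
  "slot ds i1 j1 = slot ds i2 j2" shows "i1 = i2 \<and> j1 = j2"
proof -
  let ?n = "mult ds (cls ds i1)"
  have r1: "rank ds i1 < ?n" using rank_less[OF assms(1)] .
  have r2: "rank ds i2 < ?n" using rank_less[OF assms(2)] assms(3) by simp
  have eq: "j1 * ?n + rank ds i1 = j2 * ?n + rank ds i2" using assms(3,4) unfolding slot_def by simp
  have "(j1 * ?n + rank ds i1) div ?n = j1" "(j1 * ?n + rank ds i1) mod ?n = rank ds i1"
    using r1 by auto
  moreover have "(j2 * ?n + rank ds i2) div ?n = j2" "(j2 * ?n + rank ds i2) mod ?n = rank ds i2"
    using r2 by auto
  ultimately have "j1 = j2" "rank ds i1 = rank ds i2" using eq by metis+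
  moreover have "ds ! i1 = ds ! i2" using cls_eq[OF assms(1,2)] assms(3) by simp
  ultimately show ?thesis using rank_inj by blast
qed

lemma cum_Suc: "\<beta> < length bs \<Longrightarrow> cum bs i (Suc \<beta>) = cum bs i \<beta> + (bs ! \<beta>) i"
  unfolding cum_def by (simp add: take_Suc_conv_app_nth)

lemma cum_len: "length bs \<le> \<beta> \<Longrightarrow> cum bs i \<beta> = sum_list (map (\<lambda>b. b i) bs)"
  unfolding cum_def by simp

lemma cum_mono: "\<beta> \<le> \<beta>' \<Longrightarrow> cum bs i \<beta> \<le> cum bs i \<beta>'"
proof (induction \<beta>' rule: dec_induct)
  case (step n)
  show ?case
  proof (cases "n < length bs")
    case True then show ?thesis using step.IH cum_Suc[OF True, of i] by simp
  next
    case False then show ?thesis using step.IH cum_len[of bs n i] cum_len[of bs "Suc n" i] by simp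
  qed
qed simp

context
  fixes S :: real and ds :: "real list" and k :: nat and bs :: "(nat \<Rightarrow> nat) list"
  assumes cfg: "set bs \<subseteq> configs S ds"
    and cover: "\<forall>i<m_of ds. k * mult ds i \<le> sum_list (map (\<lambda>b. b i) bs)"
    and pos: "\<forall>d\<in>set ds. 0 < d"
begin

lemma slot_bound: assumes "i' < length ds" "j < k"
  shows "slot ds i' j < cum bs (cls ds i') (length bs)"
proof -
  let ?n = "mult ds (cls ds i')"
  have "rank ds i' < ?n" using rank_less[OF assms(1)] .
  then have "j * ?n + rank ds i' < j * ?n + ?n" by simp
  also have "\<dots> = Suc j * ?n" by simp
  also have "\<dots> \<le> k * ?n" using assms(2) by (intro mult_right_mono) auto
  also have "\<dots> \<le> cum bs (cls ds i') (length bs)" using cover cls[OF assms(1)] cum_len[of bs "length bs"] by simp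
  finally show ?thesis unfolding slot_def .
qed

lemma packf_props: assumes "i' < length ds" "j < k"
  shows "packf ds bs i' j < length bs
    \<and> cum bs (cls ds i') (packf ds bs i' j) \<le> slot ds i' j
    \<and> slot ds i' j < cum bs (cls ds i') (packf ds bs i' j) + (bs ! packf ds bs i' j) (cls ds i')"
proof -
  let ?P = "\<lambda>\<beta>. slot ds i' j < cum bs (cls ds i') (Suc \<beta>)"
  let ?b = "packf ds bs i' j"
  have ex: "?P (length bs)" using slot_bound[OF assms] by (simp add: cum_len)
  have P: "?P ?b" unfolding packf_def by (rule LeastI[of ?P, OF ex])
  have lo: "cum bs (cls ds i') ?b \<le> slot ds i' j"
  proof (cases ?b)
    case 0 then show ?thesis by (simp add: cum_def)
  next
    case (Suc b')
    then have "b' < ?b" by simp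
    then have "\<not> ?P b'" unfolding packf_def by (rule not_less_Least)
    then show ?thesis using Suc by simp
  qed
  have lt: "?b < length bs"
  proof (rule ccontr)
    assume "\<not> ?thesis"
    then have "cum bs (cls ds i') (length bs) \<le> cum bs (cls ds i') ?b" by (intro cum_mono) simp
    then show False using lo slot_bound[OF assms] by simp
  qed
  show ?thesis using lt lo P cum_Suc[OF lt] by simp
qed

lemma packf_distinct: assumes "i' < length ds" "j < k" "j' < k" "j \<noteq> j'"
  shows "packf ds bs i' j \<noteq> packf ds bs i' j'"
proof
  assume eq: "packf ds bs i' j = packf ds bs i' j'"
  let ?c = "cls ds i'" let ?n = "mult ds ?c"
  let ?b = "packf ds bs i' j"
  have lt: "?b < length bs" using packf_props[OF assms(1,2)] by simp
  have "bs ! ?b \<in> configs S ds" using cfg lt by auto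
  then have bn: "(bs ! ?b) ?c \<le> ?n" using cls[OF assms(1)] unfolding configs_def by auto
  have A: "\<And>jj. jj < k \<Longrightarrow> packf ds bs i' jj = ?b \<Longrightarrow> cum bs ?c ?b \<le> slot ds i' jj \<and> slot ds i' jj < cum bs ?c ?b + ?n"
    using packf_props[OF assms(1)] bn by fastforce
  have "\<And>j1 j2. j1 < k \<Longrightarrow> j2 < k \<Longrightarrow> j1 < j2 \<Longrightarrow> packf ds bs i' j1 = ?b \<Longrightarrow> packf ds bs i' j2 = ?b \<Longrightarrow> False"
  proof -
    fix j1 j2 assume h: "j1 < k" "j2 < k" "j1 < j2" "packf ds bs i' j1 = ?b" "packf ds bs i' j2 = ?b"
    have "slot ds i' j2 = slot ds i' j1 + (j2 - j1) * ?n"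
      unfolding slot_def using h(3) by (simp add: algebra_simps diff_mult_distrib)
    moreover have "(j2 - j1) * ?n \<ge> 1 * ?n" using h(3) by (intro mult_right_mono) auto
    ultimately show False using A[OF h(1,4)] A[OF h(2,5)] by linarith
  qed
  then show False using assms eq by (cases j j' rule: linorder_cases) auto
qed

lemma bin_sum: assumes "\<beta> < length bs"
  shows "(\<Sum>p\<in>{(i, j). i < length ds \<and> j < k \<and> packf ds bs i j = \<beta>}. ds ! fst p) \<le> S"
proof -
  let ?B = "{(i, j). i < length ds \<and> j < k \<and> packf ds bs i j = \<beta>}"
  let ?b = "bs ! \<beta>"
  have fin: "finite ?B" by (rule finite_subset[of _ "{..<length ds} \<times> {..<k}"]) auto
  have bc: "?b \<in> configs S ds" using cfg assms by auto
  have cnt: "card {p \<in> ?B. cls ds (fst p) = i} \<le> ?b i" if i: "i < m_of ds" for i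
  proof -
    let ?Bi = "{p \<in> ?B. cls ds (fst p) = i}"
    have "inj_on (\<lambda>p. slot ds (fst p) (snd p)) ?Bi"
    proof (rule inj_onI)
      fix p q assume p: "p \<in> ?Bi" and q: "q \<in> ?Bi" and e: "slot ds (fst p) (snd p) = slot ds (fst q) (snd q)"
      have "fst p < length ds" "fst q < length ds" "cls ds (fst p) = cls ds (fst q)" using p q by auto
      then have "fst p = fst q \<and> snd p = snd q" using slot_inj e by blast
      then show "p = q" by (simp add: prod_eq_iff)
    qed
    moreover have "(\<lambda>p. slot ds (fst p) (snd p)) ` ?Bi \<subseteq> {cum bs i \<beta> ..< cum bs i \<beta> + ?b i}"
    proof
      fix s assume "s \<in> (\<lambda>p. slot ds (fst p) (snd p)) ` ?Bi"
      then obtain i' j where h: "i' < length ds" "j < k" "packf ds bs i' j = \<beta>" "cls ds i' = i" "s = slot ds i' j"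
        by auto
      show "s \<in> {cum bs i \<beta> ..< cum bs i \<beta> + ?b i}" using packf_props[OF h(1,2)] h(3-5) by simp
    qed
    ultimately have "card ?Bi \<le> card {cum bs i \<beta> ..< cum bs i \<beta> + ?b i}"
      by (intro card_inj_on_le) auto
    then show ?thesis by simp
  qed
  have "(\<Sum>p\<in>?B. ds ! fst p) = (\<Sum>i<m_of ds. \<Sum>p\<in>{p \<in> ?B. cls ds (fst p) = i}. ds ! fst p)"
  proof (rule sum.group[symmetric])
    show "finite ?B" by (rule fin)
    show "finite {..<m_of ds}" by simp
    show "(\<lambda>p. cls ds (fst p)) ` ?B \<subseteq> {..<m_of ds}"
    proof
      fix y assume "y \<in> (\<lambda>p. cls ds (fst p)) ` ?B"
      then obtain i' j where "i' < length ds" "y = cls ds i'" by auto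
      then show "y \<in> {..<m_of ds}" using cls[of i' ds] by simp
    qed
  qed
  also have "\<dots> = (\<Sum>i<m_of ds. real (card {p \<in> ?B. cls ds (fst p) = i}) * sizes ds ! i)"
  proof (rule sum.cong[OF refl])
    fix i assume "i \<in> {..<m_of ds}"
    have "(\<Sum>p\<in>{p \<in> ?B. cls ds (fst p) = i}. ds ! fst p) = (\<Sum>p\<in>{p \<in> ?B. cls ds (fst p) = i}. sizes ds ! i)"
    proof (rule sum.cong[OF refl])
      fix p assume "p \<in> {p \<in> ?B. cls ds (fst p) = i}"
      then have "fst p < length ds" "cls ds (fst p) = i" by auto
      then show "ds ! fst p = sizes ds ! i" using cls[of "fst p" ds] by simp
    qed
    then show "(\<Sum>p\<in>{p \<in> ?B. cls ds (fst p) = i}. ds ! fst p) = real (card {p \<in> ?B. cls ds (fst p) = i}) * sizes ds ! i"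
      by simp
  qed
  also have "\<dots> \<le> (\<Sum>i<m_of ds. real (?b i) * sizes ds ! i)"
  proof (rule sum_mono)
    fix i assume i: "i \<in> {..<m_of ds}"
    have "sizes ds ! i \<in> set ds" using i unfolding m_of_def by (metis lessThan_iff nth_mem sizes_set)
    then have "sizes ds ! i \<ge> 0" using pos by force
    then show "real (card {p \<in> ?B. cls ds (fst p) = i}) * sizes ds ! i \<le> real (?b i) * sizes ds ! i"
      using cnt i by (intro mult_right_mono) auto
  qed
  also have "\<dots> \<le> S" using bc unfolding configs_def by auto
  finally show ?thesis .
qed

lemma pack_exists: "is_k_packing S ds k (length bs) (packf ds bs)"
  unfolding is_k_packing_def using packf_props packf_distinct bin_sum by blast

end



definition sz :: "real list \<Rightarrow> (nat \<Rightarrow> nat) \<Rightarrow> real" where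
  "sz ds b = (\<Sum>i<m_of ds. real (b i) * sizes ds ! i)"

definition vs :: "(nat \<Rightarrow> nat) list \<Rightarrow> nat \<Rightarrow> nat" where
  "vs L i = sum_list (map (\<lambda>b. b i) L)"

lemma vs_simps[simp]: "vs [] i = 0" "vs (b # L) i = b i + vs L i" "vs (L @ L') i = vs L i + vs L' i"
  unfolding vs_def by auto

lemma sz_add: "sz ds (\<lambda>i. a i + b i) = sz ds a + sz ds b"
  unfolding sz_def by (simp add: sum.distrib algebra_simps)

lemma sz_cong: "(\<And>i. i < m_of ds \<Longrightarrow> a i = b i) \<Longrightarrow> sz ds a = sz ds b"
  unfolding sz_def by (rule sum.cong) auto

lemma sz_zero: "sz ds (\<lambda>i. 0) = 0" unfolding sz_def by simp

lemma sz_unit: assumes "i0 < m_of ds" shows "sz ds (\<lambda>i. if i = i0 then 1 else 0) = sizes ds ! i0"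
proof -
  have "sz ds (\<lambda>i. if i = i0 then 1 else 0) = (\<Sum>i<m_of ds. if i = i0 then sizes ds ! i0 else 0)"
    unfolding sz_def by (rule sum.cong) auto
  also have "\<dots> = sizes ds ! i0" using assms by simp
  finally show ?thesis .
qed

lemma sum_sz: "sum_list (map (sz ds) L) = sz ds (vs L)"
proof (induction L)
  case Nil then show ?case using sz_zero[of ds] by (simp add: vs_def[abs_def])
next
  case (Cons b L)
  have "vs (b # L) = (\<lambda>i. b i + vs L i)" by auto
  then show ?case using Cons sz_add[of ds b "vs L"] by simp
qed

lemma size_class_in: "i < m_of ds \<Longrightarrow> sizes ds ! i \<in> set ds"
  unfolding m_of_def by (metis nth_mem sizes_set)

context
  fixes S :: real and ds :: "real list"
  assumes pos: "\<forall>d\<in>set ds. 0 < d \<and> d \<le> S" and Spos: "S > 0"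
begin

lemma c_pos: "i < m_of ds \<Longrightarrow> 0 < sizes ds ! i \<and> sizes ds ! i \<le> S"
  using pos size_class_in by blast

lemma sz_nonneg: "sz ds b \<ge> 0"
  unfolding sz_def using c_pos by (intro sum_nonneg) (simp add: less_imp_le)

lemma nf: "\<forall>v. (\<Sum>i<m_of ds. v i) = N \<longrightarrow> (\<forall>i\<ge>m_of ds. v i = 0) \<longrightarrow>
   (\<exists>L. L \<noteq> [] \<and> (\<forall>b\<in>set L. sz ds b \<le> S \<and> (\<forall>i\<ge>m_of ds. b i = 0)) \<and> (\<forall>i. vs L i = v i)
     \<and> real (length L - 1) * S \<le> 2 * sum_list (map (sz ds) (butlast L)) + sz ds (last L))"
proof (induction N)
  case 0
  show ?case
  proof (intro allI impI)
    fix v :: "nat \<Rightarrow> nat" assume h: "(\<Sum>i<m_of ds. v i) = 0" "\<forall>i\<ge>m_of ds. v i = 0"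
    have v0: "v i = 0" for i using h by (cases "i < m_of ds") auto
    have "S \<ge> 0" using Spos by simp
    then show "\<exists>L. L \<noteq> [] \<and> (\<forall>b\<in>set L. sz ds b \<le> S \<and> (\<forall>i\<ge>m_of ds. b i = 0)) \<and> (\<forall>i. vs L i = v i)
     \<and> real (length L - 1) * S \<le> 2 * sum_list (map (sz ds) (butlast L)) + sz ds (last L)"
      by (intro exI[of _ "[\<lambda>i. 0]"]) (simp add: sz_zero v0)
  qed
next
  case (Suc N)
  show ?case
  proof (intro allI impI)
    fix v :: "nat \<Rightarrow> nat" assume h: "(\<Sum>i<m_of ds. v i) = Suc N" "\<forall>i\<ge>m_of ds. v i = 0"
    obtain i0 where i0: "i0 < m_of ds" "v i0 > 0"
      using h(1) by (metis lessThan_iff nat.distinct(1) neq0_conv sum.neutral)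
    define e :: "nat \<Rightarrow> nat" where "e = (\<lambda>i. if i = i0 then 1 else 0)"
    define v' where "v' = v(i0 := v i0 - 1)"
    have vv: "v i = v' i + e i" for i unfolding v'_def e_def using i0 by auto
    have "(\<Sum>i<m_of ds. v i) = (\<Sum>i<m_of ds. v' i) + (\<Sum>i<m_of ds. e i)"
      unfolding vv by (simp add: sum.distrib)
    moreover have "(\<Sum>i<m_of ds. e i) = 1" unfolding e_def using i0 by simp
    ultimately have "(\<Sum>i<m_of ds. v' i) = N" using h(1) by simp
    moreover have "\<forall>i\<ge>m_of ds. v' i = 0" using h(2) i0 unfolding v'_def by auto
    ultimately obtain L where L: "L \<noteq> []" "\<forall>b\<in>set L. sz ds b \<le> S \<and> (\<forall>i\<ge>m_of ds. b i = 0)"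
      "\<forall>i. vs L i = v' i" "real (length L - 1) * S \<le> 2 * sum_list (map (sz ds) (butlast L)) + sz ds (last L)"
      using Suc.IH by blast
    define l where "l = last L"
    define B where "B = butlast L"
    have LBl: "L = B @ [l]" unfolding l_def B_def using L(1) by simp
    have se: "sz ds e = sizes ds ! i0" unfolding e_def using sz_unit[OF i0(1)] .
    have ce: "0 < sizes ds ! i0" "sizes ds ! i0 \<le> S" using c_pos[OF i0(1)] by auto
    have lprops: "sz ds l \<le> S" "\<forall>i\<ge>m_of ds. l i = 0" using L(2) LBl by auto
    have eprops: "\<forall>i\<ge>m_of ds. e i = 0" unfolding e_def using i0 by auto
    have lenL: "length L - 1 = length B" using LBl by simp
    show "\<exists>L. L \<noteq> [] \<and> (\<forall>b\<in>set L. sz ds b \<le> S \<and> (\<forall>i\<ge>m_of ds. b i = 0)) \<and> (\<forall>i. vs L i = v i)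
     \<and> real (length L - 1) * S \<le> 2 * sum_list (map (sz ds) (butlast L)) + sz ds (last L)"
    proof (cases "sz ds l + sizes ds ! i0 \<le> S")
      case True
      define l' where "l' = (\<lambda>i. l i + e i)"
      have sl': "sz ds l' = sz ds l + sizes ds ! i0" unfolding l'_def sz_add se ..
      show ?thesis
      proof (intro exI[of _ "B @ [l']"] conjI)
        show "B @ [l'] \<noteq> []" by simp
        show "\<forall>b\<in>set (B @ [l']). sz ds b \<le> S \<and> (\<forall>i\<ge>m_of ds. b i = 0)"
          using L(2) LBl True sl' lprops eprops unfolding l'_def by auto
        show "\<forall>i. vs (B @ [l']) i = v i" using L(3) LBl vv unfolding l'_def by auto
        show "real (length (B @ [l']) - 1) * S \<le> 2 * sum_list (map (sz ds) (butlast (B @ [l']))) + sz ds (last (B @ [l']))"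
          using L(4) LBl sl' ce by (simp add: lenL)
      qed
    next
      case False
      show ?thesis
      proof (intro exI[of _ "L @ [e]"] conjI)
        show "L @ [e] \<noteq> []" by simp
        show "\<forall>b\<in>set (L @ [e]). sz ds b \<le> S \<and> (\<forall>i\<ge>m_of ds. b i = 0)"
          using L(2) se ce eprops by auto
        show "\<forall>i. vs (L @ [e]) i = v i" using L(3) vv by auto
        have "real (length (L @ [e]) - 1) * S = real (length B) * S + S" using LBl by (simp add: algebra_simps)
        also have "\<dots> \<le> 2 * sum_list (map (sz ds) B) + sz ds l + S" using L(4) LBl by (simp add: lenL)
        also have "\<dots> \<le> 2 * sum_list (map (sz ds) B) + 2 * sz ds l + sz ds e" using False se by simp
        also have "\<dots> = 2 * sum_list (map (sz ds) (butlast (L @ [e]))) + sz ds (last (L @ [e]))"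
        proof -
          have sL: "sum_list (map (sz ds) L) = sum_list (map (sz ds) B) + sz ds l" by (subst LBl) simp
          show ?thesis by (simp add: sL)
        qed
        finally show "real (length (L @ [e]) - 1) * S \<le> 2 * sum_list (map (sz ds) (butlast (L @ [e]))) + sz ds (last (L @ [e]))" .
      qed
    qed
  qed
qed

lemma layer: assumes "\<forall>i<m_of ds. v i \<le> mult ds i"
  shows "\<exists>L. set L \<subseteq> configs S ds \<and> (\<forall>i<m_of ds. vs L i = v i) \<and> real (length L) * S \<le> 2 * sz ds v + S"
proof -
  define v0 where "v0 = (\<lambda>i. if i < m_of ds then v i else 0)"
  obtain L where L: "L \<noteq> []" "\<forall>b\<in>set L. sz ds b \<le> S \<and> (\<forall>i\<ge>m_of ds. b i = 0)" "\<forall>i. vs L i = v0 i"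
      "real (length L - 1) * S \<le> 2 * sum_list (map (sz ds) (butlast L)) + sz ds (last L)"
  proof -
    have "\<forall>i\<ge>m_of ds. v0 i = 0" unfolding v0_def by simp
    then show ?thesis using nf[of "\<Sum>i<m_of ds. v0 i", THEN spec[of _ v0]] that by blast
  qed
  have sub: "set L \<subseteq> configs S ds"
  proof
    fix b assume b: "b \<in> set L"
    have "b i \<le> v0 i" for i
    proof -
      have "b i \<le> vs L i" unfolding vs_def using b by (intro member_le_sum_list) auto
      then show ?thesis using L(3) by simp
    qed
    then have "\<forall>i<m_of ds. b i \<le> mult ds i" using assms unfolding v0_def
      by (metis (full_types) le_trans)
    moreover have "sz ds b \<le> S" "\<forall>i\<ge>m_of ds. b i = 0" using L(2) b by auto
    ultimately show "b \<in> configs S ds" unfolding configs_def sz_def by blast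
  qed
  have "sum_list (map (sz ds) L) = sum_list (map (sz ds) (butlast L)) + sz ds (last L)"
  proof -
    have "sum_list (map (sz ds) (butlast L @ [last L])) = sum_list (map (sz ds) (butlast L)) + sz ds (last L)"
      by simp
    then show ?thesis using append_butlast_last_id[OF L(1)] by simp
  qed
  moreover have "sum_list (map (sz ds) L) = sz ds v"
    unfolding sum_sz using L(3) by (intro sz_cong) (simp add: v0_def)
  moreover have "sum_list (map (sz ds) (butlast L)) \<ge> 0" using sz_nonneg by (intro sum_list_nonneg) auto
  moreover have "real (length L) * S = real (length L - 1) * S + S"
  proof -
    have "length L \<ge> 1" using L(1) by (cases L) auto
    then have e: "real (length L) = real (length L - 1) + 1" by simp
    show ?thesis unfolding e by (simp only: distrib_right mult.left_neutral)
  qed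
  ultimately have "real (length L) * S \<le> 2 * sz ds v + S" using L(4) sz_nonneg[of "last L"] by linarith
  moreover have "\<forall>i<m_of ds. vs L i = v i" using L(3) unfolding v0_def by simp
  ultimately show ?thesis using sub by blast
qed

lemma residual_pack: "\<forall>r. (\<forall>i<m_of ds. r i \<le> k * mult ds i) \<longrightarrow>
  (\<exists>L. set L \<subseteq> configs S ds \<and> (\<forall>i<m_of ds. r i \<le> vs L i) \<and> real (length L) * S \<le> 2 * sz ds r + real k * S)"
proof (induction k)
  case 0 then show ?case by (intro allI impI exI[of _ "[]"]) (simp add: sz_def)
next
  case (Suc k)
  show ?case
  proof (intro allI impI)
    fix r :: "nat \<Rightarrow> nat" assume r: "\<forall>i<m_of ds. r i \<le> Suc k * mult ds i"
    define v where "v = (\<lambda>i. min (r i) (mult ds i))"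
    define w where "w = (\<lambda>i. r i - v i)"
    have "\<forall>i<m_of ds. w i \<le> k * mult ds i"
    proof (intro allI impI)
      fix i assume i: "i < m_of ds"
      have ri: "r i \<le> mult ds i + k * mult ds i" using r i by simp
      show "w i \<le> k * mult ds i"
      proof (cases "r i \<le> mult ds i")
        case True then show ?thesis unfolding w_def v_def by simp
      next
        case False then show ?thesis unfolding w_def v_def using ri by simp
      qed
    qed
    then obtain L2 where L2: "set L2 \<subseteq> configs S ds" "\<forall>i<m_of ds. w i \<le> vs L2 i" "real (length L2) * S \<le> 2 * sz ds w + real k * S"
      using Suc.IH by blast
    obtain L1 where L1: "set L1 \<subseteq> configs S ds" "\<forall>i<m_of ds. vs L1 i = v i" "real (length L1) * S \<le> 2 * sz ds v + S"
      using layer[of v] unfolding v_def by auto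
    have rvw: "r i = v i + w i" for i unfolding w_def v_def by auto
    have "sz ds r = sz ds v + sz ds w" unfolding sz_add[symmetric] by (rule sz_cong) (simp add: rvw)
    show "\<exists>L. set L \<subseteq> configs S ds \<and> (\<forall>i<m_of ds. r i \<le> vs L i) \<and> real (length L) * S \<le> 2 * sz ds r + real (Suc k) * S"
    proof (intro exI[of _ "L1 @ L2"] conjI allI impI)
      show "set (L1 @ L2) \<subseteq> configs S ds" using L1(1) L2(1) by simp
    next
      fix i assume i: "i < m_of ds"
      show "r i \<le> vs (L1 @ L2) i" using L1(2) L2(2) i rvw[of i] by simp
    next
      have "real (length (L1 @ L2)) * S = real (length L1) * S + real (length L2) * S"
        by (simp add: distrib_right)
      also have "\<dots> \<le> (2 * sz ds v + S) + (2 * sz ds w + real k * S)" using L1(3) L2(3) by linarith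
      also have "\<dots> = 2 * sz ds r + real (Suc k) * S" using \<open>sz ds r = sz ds v + sz ds w\<close>
        by (simp add: distrib_right)
      finally show "real (length (L1 @ L2)) * S \<le> 2 * sz ds r + real (Suc k) * S" .
    qed
  qed
qed

end



lemma dep: "finite A \<Longrightarrow> card A > m \<Longrightarrow> (\<forall>a\<in>A. \<forall>i\<ge>m. v a i = 0) \<Longrightarrow>
  \<exists>u. (\<forall>i. (\<Sum>a\<in>A. u a * v a i) = (0::real)) \<and> (\<exists>a\<in>A. u a \<noteq> 0)"
proof (induction m arbitrary: A v)
  case 0
  then have "A \<noteq> {}" by auto
  then show ?case using 0 by (intro exI[of _ "\<lambda>_. 1"]) auto
next
  case (Suc m)
  show ?case
  proof (cases "\<forall>a\<in>A. v a m = 0")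
    case True
    then have "\<forall>a\<in>A. \<forall>i\<ge>m. v a i = 0" using Suc.prems(3) by (metis Suc_leI le_neq_implies_less)
    then show ?thesis using Suc.IH[of A v] Suc.prems by auto
  next
    case False
    then obtain a0 where a0: "a0 \<in> A" "v a0 m \<noteq> 0" by blast
    define A' where "A' = A - {a0}"
    define w where "w = (\<lambda>a i. v a i - (v a m / v a0 m) * v a0 i)"
    have fA': "finite A'" using Suc.prems unfolding A'_def by auto
    have cA': "card A' > m" using Suc.prems a0 unfolding A'_def by (simp add: card_Diff_singleton)
    have wz: "\<forall>a\<in>A'. \<forall>i\<ge>m. w a i = 0"
    proof (intro ballI allI impI)
      fix a i assume a: "a \<in> A'" and i: "m \<le> i"
      show "w a i = 0"
      proof (cases "i = m")
        case True then show ?thesis unfolding w_def using a0 by simp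
      next
        case False
        then have "Suc m \<le> i" using i by simp
        then show ?thesis unfolding w_def using Suc.prems(3) a a0 unfolding A'_def by auto
      qed
    qed
    obtain u' where u': "\<forall>i. (\<Sum>a\<in>A'. u' a * w a i) = 0" "\<exists>a\<in>A'. u' a \<noteq> 0"
      using Suc.IH[OF fA' cA' wz] by blast
    define t where "t = (\<Sum>a\<in>A'. u' a * v a m) / v a0 m"
    define u where "u = (\<lambda>a. if a = a0 then - t else u' a)"
    have "(\<Sum>a\<in>A. u a * v a i) = 0" for i
    proof -
      have A: "A = insert a0 A'" using a0 unfolding A'_def by auto
      have "(\<Sum>a\<in>A. u a * v a i) = u a0 * v a0 i + (\<Sum>a\<in>A'. u a * v a i)"
        unfolding A by (rule sum.insert) (use fA' in \<open>auto simp: A'_def\<close>)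
      also have "(\<Sum>a\<in>A'. u a * v a i) = (\<Sum>a\<in>A'. u' a * v a i)"
        by (rule sum.cong) (auto simp: u_def A'_def)
      also have "u a0 = - t" unfolding u_def by simp
      finally have "(\<Sum>a\<in>A. u a * v a i) = - t * v a0 i + (\<Sum>a\<in>A'. u' a * v a i)" .
      also have "(\<Sum>a\<in>A'. u' a * v a i) = (\<Sum>a\<in>A'. u' a * w a i) + t * v a0 i"
        unfolding w_def t_def by (simp add: algebra_simps sum_subtractf sum_distrib_left sum_distrib_right sum_divide_distrib)
      finally show ?thesis using u'(1) by simp
    qed
    moreover have "\<exists>a\<in>A. u a \<noteq> 0" using u'(2) unfolding u_def A'_def by auto
    ultimately show ?thesis by blast
  qed
qed

context
  fixes S :: real and ds :: "real list" and k :: nat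
begin

lemma reduce_step:
  assumes feas: "lp_feasible S ds k x" and big: "card {a\<in>configs S ds. x a \<noteq> 0} > m_of ds"
  shows "\<exists>x'. lp_feasible S ds k x' \<and> (\<Sum>a\<in>configs S ds. x' a) \<le> (\<Sum>a\<in>configs S ds. x a)
     \<and> card {a\<in>configs S ds. x' a \<noteq> 0} < card {a\<in>configs S ds. x a \<noteq> 0}"
proof -
  let ?C = "configs S ds"
  define A where "A = {a\<in>?C. x a \<noteq> 0}"
  have fC: "finite ?C" by (rule configs_finite)
  have fA: "finite A" "A \<subseteq> ?C" unfolding A_def using fC by auto
  have xnn: "\<And>a. a \<in> ?C \<Longrightarrow> x a \<ge> 0" using feas unfolding lp_feasible_def by auto
  have xpos: "\<And>a. a \<in> A \<Longrightarrow> x a > 0" using xnn unfolding A_def by (simp add: less_le)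
  have "\<forall>a\<in>A. \<forall>i\<ge>m_of ds. real (a i) = 0" using fA(2) unfolding configs_def by auto
  then obtain u where u: "\<forall>i. (\<Sum>a\<in>A. u a * real (a i)) = 0" "\<exists>a\<in>A. u a \<noteq> 0"
    using dep[OF fA(1) big[folded A_def], where v = "\<lambda>a i. real (a i)"] by blast
  have "\<exists>\<sigma>::real. (\<sigma> = 1 \<or> \<sigma> = -1) \<and> \<sigma> * (\<Sum>a\<in>A. u a) \<le> 0 \<and> (\<exists>a\<in>A. \<sigma> * u a < 0)"
  proof (cases "(\<Sum>a\<in>A. u a) < 0")
    case True
    have "\<exists>a\<in>A. u a < 0"
    proof (rule ccontr)
      assume "\<not> ?thesis" then have "\<forall>a\<in>A. u a \<ge> 0" by (simp add: not_less)
      then have "sum u A \<ge> 0" by (simp add: sum_nonneg)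
      then show False using True by simp
    qed
    then show ?thesis using True by (intro exI[of _ 1]) auto
  next
    case F1: False
    show ?thesis
    proof (cases "(\<Sum>a\<in>A. u a) > 0")
      case True
      have "\<exists>a\<in>A. u a > 0"
      proof (rule ccontr)
        assume "\<not> ?thesis" then have "\<forall>a\<in>A. u a \<le> 0" by (simp add: not_less)
        then have "sum u A \<le> 0" by (simp add: sum_nonpos)
        then show False using True by simp
      qed
      then show ?thesis using True by (intro exI[of _ "-1"]) auto
    next
      case False
      then have s0: "(\<Sum>a\<in>A. u a) = 0" using F1 by simp
      obtain a1 where a1: "a1 \<in> A" "u a1 \<noteq> 0" using u(2) by blast
      show ?thesis
      proof (cases "u a1 < 0")
        case True then show ?thesis using s0 a1 by (intro exI[of _ 1]) auto
      next
        case False then show ?thesis using s0 a1 by (intro exI[of _ "-1"]) (auto intro!: bexI[of _ a1])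
      qed
    qed
  qed
  then obtain \<sigma> :: real where sg: "\<sigma> = 1 \<or> \<sigma> = -1" "\<sigma> * (\<Sum>a\<in>A. u a) \<le> 0" "\<exists>a\<in>A. \<sigma> * u a < 0"
    by blast
  define dd where "dd = (\<lambda>a. if a \<in> A then \<sigma> * u a else 0)"
  have dd0: "\<And>i. (\<Sum>a\<in>?C. real (a i) * dd a) = 0"
  proof -
    fix i
    have "(\<Sum>a\<in>?C. real (a i) * dd a) = (\<Sum>a\<in>A. real (a i) * dd a)"
      by (rule sum.mono_neutral_right[OF fC fA(2)]) (auto simp: dd_def)
    also have "\<dots> = (\<Sum>a\<in>A. \<sigma> * (u a * real (a i)))"
      by (rule sum.cong) (auto simp: dd_def)
    also have "\<dots> = \<sigma> * (\<Sum>a\<in>A. u a * real (a i))"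
      by (simp add: sum_distrib_left)
    finally show "(\<Sum>a\<in>?C. real (a i) * dd a) = 0" using u(1) by simp
  qed
  have ddsum: "(\<Sum>a\<in>?C. dd a) \<le> 0"
  proof -
    have "(\<Sum>a\<in>?C. dd a) = (\<Sum>a\<in>A. dd a)"
      by (rule sum.mono_neutral_right[OF fC fA(2)]) (auto simp: dd_def)
    also have "\<dots> = (\<Sum>a\<in>A. \<sigma> * u a)" by (rule sum.cong) (auto simp: dd_def)
    also have "\<dots> = \<sigma> * (\<Sum>a\<in>A. u a)" by (simp add: sum_distrib_left)
    finally show ?thesis using sg(2) by simp
  qed
  define NA where "NA = {a\<in>A. dd a < 0}"
  have NA: "finite NA" "NA \<noteq> {}" using fA sg(3) unfolding NA_def dd_def by auto
  define lam where "lam = Min ((\<lambda>a. x a / - dd a) ` NA)"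
  have "lam \<in> (\<lambda>a. x a / - dd a) ` NA" unfolding lam_def using NA by (intro Min_in) auto
  then obtain as where as: "as \<in> NA" "lam = x as / - dd as" by blast
  have lam_le: "\<And>a. a \<in> NA \<Longrightarrow> lam \<le> x a / - dd a" unfolding lam_def by (rule Min_le) (use NA in auto)
  have lam_nn: "lam \<ge> 0"
  proof -
    have "x as > 0" "- dd as > 0" using as(1) xpos unfolding NA_def by auto
    then have "x as / - dd as > 0" by (rule divide_pos_pos)
    then show ?thesis using as(2) by linarith
  qed
  define x' where "x' = (\<lambda>a. x a + lam * dd a)"
  have feas': "lp_feasible S ds k x'"
    unfolding lp_feasible_def
  proof (intro conjI ballI allI impI)
    fix a assume a: "a \<in> ?C"
    show "x' a \<ge> 0"
    proof (cases "a \<in> NA")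
      case True
      then have "dd a < 0" unfolding NA_def by simp
      then have c: "- dd a > 0" by simp
      have "lam \<le> x a / - dd a" using lam_le[OF True] .
      then have "lam * - dd a \<le> x a" by (simp only: pos_le_divide_eq[OF c])
      then show ?thesis unfolding x'_def by simp
    next
      case False
      then have "dd a \<ge> 0" unfolding NA_def dd_def by auto
      then show ?thesis unfolding x'_def using xnn[OF a] lam_nn by simp
    qed
  next
    fix i assume i: "i < m_of ds"
    have "(\<Sum>a\<in>?C. real (a i) * x' a) = (\<Sum>a\<in>?C. real (a i) * x a) + lam * (\<Sum>a\<in>?C. real (a i) * dd a)"
      unfolding x'_def by (simp add: distrib_left sum.distrib sum_distrib_left mult.left_commute)
    then show "(\<Sum>a\<in>?C. real (a i) * x' a) = real k * real (mult ds i)"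
      using dd0 feas i unfolding lp_feasible_def by simp
  qed
  have "(\<Sum>a\<in>?C. x' a) = (\<Sum>a\<in>?C. x a) + lam * (\<Sum>a\<in>?C. dd a)"
    unfolding x'_def by (simp add: sum.distrib sum_distrib_left)
  moreover have "lam * (\<Sum>a\<in>?C. dd a) \<le> 0" using lam_nn ddsum by (simp add: mult_nonneg_nonpos)
  ultimately have obj: "(\<Sum>a\<in>?C. x' a) \<le> (\<Sum>a\<in>?C. x a)" by simp
  have sub: "{a\<in>?C. x' a \<noteq> 0} \<subseteq> A - {as}"
  proof
    fix a assume a: "a \<in> {a\<in>?C. x' a \<noteq> 0}"
    have "a \<in> A"
    proof (rule ccontr)
      assume "a \<notin> A" then have "x a = 0" "dd a = 0" using a unfolding A_def dd_def by auto
      then show False using a unfolding x'_def by simp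
    qed
    moreover have "x' as = 0" using as unfolding x'_def NA_def by auto
    ultimately show "a \<in> A - {as}" using a by auto
  qed
  have "card {a\<in>?C. x' a \<noteq> 0} \<le> card (A - {as})" using sub fA by (intro card_mono) auto
  also have "\<dots> < card A" using as fA unfolding NA_def by (intro card_Diff1_less) auto
  finally show ?thesis using feas' obj unfolding A_def by blast
qed

lemma reduce: "\<forall>x. card {a\<in>configs S ds. x a \<noteq> 0} = N \<longrightarrow> lp_feasible S ds k x \<longrightarrow>
   (\<exists>x'. lp_feasible S ds k x' \<and> (\<Sum>a\<in>configs S ds. x' a) \<le> (\<Sum>a\<in>configs S ds. x a)
     \<and> card {a\<in>configs S ds. x' a \<noteq> 0} \<le> m_of ds)"
proof (induction N rule: less_induct)
  case (less N)
  show ?case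
  proof (intro allI impI)
    fix x assume h: "card {a\<in>configs S ds. x a \<noteq> 0} = N" "lp_feasible S ds k x"
    show "\<exists>x'. lp_feasible S ds k x' \<and> (\<Sum>a\<in>configs S ds. x' a) \<le> (\<Sum>a\<in>configs S ds. x a)
     \<and> card {a\<in>configs S ds. x' a \<noteq> 0} \<le> m_of ds"
    proof (cases "N \<le> m_of ds")
      case True then show ?thesis using h by auto
    next
      case False
      then obtain x1 where x1: "lp_feasible S ds k x1" "(\<Sum>a\<in>configs S ds. x1 a) \<le> (\<Sum>a\<in>configs S ds. x a)"
        "card {a\<in>configs S ds. x1 a \<noteq> 0} < N"
        using reduce_step[OF h(2)] h(1) by force
      then obtain x2 where "lp_feasible S ds k x2" "(\<Sum>a\<in>configs S ds. x2 a) \<le> (\<Sum>a\<in>configs S ds. x1 a)"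
        "card {a\<in>configs S ds. x2 a \<noteq> 0} \<le> m_of ds"
        using less.IH[OF x1(3)] by blast
      then show ?thesis using x1(2) by (intro exI[of _ x2]) auto
    qed
  qed
qed

end



lemma sum_by_class: assumes "finite P" "\<forall>p\<in>P. fst p < length ds"
  shows "(\<Sum>p\<in>P. ds ! fst p) = (\<Sum>i<m_of ds. real (card {p\<in>P. cls ds (fst p) = i}) * sizes ds ! i)"
proof -
  have "(\<Sum>p\<in>P. ds ! fst p) = (\<Sum>i<m_of ds. \<Sum>p\<in>{p \<in> P. cls ds (fst p) = i}. ds ! fst p)"
  proof (rule sum.group[symmetric])
    show "finite P" by (rule assms(1))
    show "finite {..<m_of ds}" by simp
    show "(\<lambda>p. cls ds (fst p)) ` P \<subseteq> {..<m_of ds}"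
    proof
      fix y assume "y \<in> (\<lambda>p. cls ds (fst p)) ` P"
      then obtain p where "p \<in> P" "y = cls ds (fst p)" by auto
      then show "y \<in> {..<m_of ds}" using cls[of "fst p" ds] assms(2) by simp
    qed
  qed
  also have "\<dots> = (\<Sum>i<m_of ds. real (card {p\<in>P. cls ds (fst p) = i}) * sizes ds ! i)"
  proof (rule sum.cong[OF refl])
    fix i assume "i \<in> {..<m_of ds}"
    have "(\<Sum>p\<in>{p \<in> P. cls ds (fst p) = i}. ds ! fst p) = (\<Sum>p\<in>{p \<in> P. cls ds (fst p) = i}. sizes ds ! i)"
    proof (rule sum.cong[OF refl])
      fix p assume "p \<in> {p \<in> P. cls ds (fst p) = i}"
      then have "fst p < length ds" "cls ds (fst p) = i" using assms(2) by auto
      then show "ds ! fst p = sizes ds ! i" using cls[of "fst p" ds] by simp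
    qed
    then show "(\<Sum>p\<in>{p \<in> P. cls ds (fst p) = i}. ds ! fst p) = real (card {p\<in>P. cls ds (fst p) = i}) * sizes ds ! i"
      by simp
  qed
  finally show ?thesis .
qed

lemma class_card: assumes "i < m_of ds"
  shows "card {i'. i' < length ds \<and> cls ds i' = i} = mult ds i"
proof -
  have "{i'. i' < length ds \<and> cls ds i' = i} = {i'. i' < length ds \<and> ds ! i' = sizes ds ! i}"
  proof (rule set_eqI, rule iffI)
    fix x assume "x \<in> {i'. i' < length ds \<and> cls ds i' = i}"
    then show "x \<in> {i'. i' < length ds \<and> ds ! i' = sizes ds ! i}" using cls[of x ds] by auto
  next
    fix x assume "x \<in> {i'. i' < length ds \<and> ds ! i' = sizes ds ! i}"
    then show "x \<in> {i'. i' < length ds \<and> cls ds i' = i}" using cls_iff[of x ds i] assms by auto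
  qed
  then show ?thesis by (simp add: mult_card)
qed

context
  fixes S :: real and ds :: "real list" and k :: nat
  assumes pos: "\<forall>d\<in>set ds. 0 < d \<and> d \<le> S" and Spos: "S > 0"
begin

lemma lp_lower: assumes feas: "lp_feasible S ds k x"
  shows "total_size ds k \<le> S * (\<Sum>a\<in>configs S ds. x a)"
proof -
  let ?C = "configs S ds"
  have "total_size ds k = (\<Sum>i<m_of ds. (real k * real (mult ds i)) * sizes ds ! i)"
    unfolding total_size_def sum_list_classes by (simp add: sum_distrib_left mult.assoc)
  also have "\<dots> = (\<Sum>i<m_of ds. (\<Sum>a\<in>?C. real (a i) * x a) * sizes ds ! i)"
    using feas unfolding lp_feasible_def by simp
  also have "\<dots> = (\<Sum>i<m_of ds. \<Sum>a\<in>?C. x a * (real (a i) * sizes ds ! i))"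
    by (intro sum.cong refl) (simp add: sum_distrib_left sum_distrib_right mult_ac)
  also have "\<dots> = (\<Sum>a\<in>?C. \<Sum>i<m_of ds. x a * (real (a i) * sizes ds ! i))"
    by (rule sum.swap)
  also have "\<dots> = (\<Sum>a\<in>?C. x a * sz ds a)"
    unfolding sz_def by (simp add: sum_distrib_left)
  also have "\<dots> \<le> (\<Sum>a\<in>?C. x a * S)"
  proof (rule sum_mono)
    fix a assume a: "a \<in> ?C"
    have "x a \<ge> 0" using feas a unfolding lp_feasible_def by auto
    moreover have "sz ds a \<le> S" using a unfolding configs_def sz_def by auto
    ultimately show "x a * sz ds a \<le> x a * S" by (rule mult_left_mono[rotated])
  qed
  also have "\<dots> = S * (\<Sum>a\<in>?C. x a)" by (simp add: sum_distrib_left mult.commute)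
  finally show ?thesis .
qed


lemma pack_to_lp: assumes pk: "is_k_packing S ds k N f"
  shows "\<exists>x. lp_feasible S ds k x \<and> (\<Sum>a\<in>configs S ds. x a) = real N"
proof -
  let ?C = "configs S ds"
  define Bin where "Bin = (\<lambda>\<beta>. {(i, j). i < length ds \<and> j < k \<and> f i j = \<beta>})"
  define cb where "cb = (\<lambda>\<beta> i. if i < m_of ds then card {p \<in> Bin \<beta>. cls ds (fst p) = i} else 0)"
  have pk1: "\<And>i j. i < length ds \<Longrightarrow> j < k \<Longrightarrow> f i j < N"
    and pk2: "\<And>i j j'. i < length ds \<Longrightarrow> j < k \<Longrightarrow> j' < k \<Longrightarrow> j \<noteq> j' \<Longrightarrow> f i j \<noteq> f i j'"
    and pk3: "\<And>b. b < N \<Longrightarrow> (\<Sum>p\<in>Bin b. ds ! fst p) \<le> S"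
    using pk unfolding is_k_packing_def Bin_def by auto
  have finB: "finite (Bin \<beta>)" for \<beta>
    by (rule finite_subset[of _ "{..<length ds} \<times> {..<k}"]) (auto simp: Bin_def)
  have Bfst: "\<forall>p\<in>Bin \<beta>. fst p < length ds" for \<beta> unfolding Bin_def by auto
  have cbC: "cb \<beta> \<in> ?C" if b: "\<beta> < N" for \<beta>
  proof -
    have le: "cb \<beta> i \<le> mult ds i" if i: "i < m_of ds" for i
    proof -
      let ?Bi = "{p \<in> Bin \<beta>. cls ds (fst p) = i}"
      have "inj_on fst ?Bi"
      proof (rule inj_onI)
        fix p q assume p: "p \<in> ?Bi" and q: "q \<in> ?Bi" and e: "fst p = fst q"
        obtain i1 j1 where P: "p = (i1, j1)" by (cases p)
        obtain i2 j2 where Q: "q = (i2, j2)" by (cases q)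
        have "i1 < length ds" "j1 < k" "j2 < k" "f i1 j1 = \<beta>" "f i1 j2 = \<beta>"
          using p q e P Q unfolding Bin_def by auto
        then have "j1 = j2" using pk2 by metis
        then show "p = q" using P Q e by simp
      qed
      moreover have "fst ` ?Bi \<subseteq> {i'. i' < length ds \<and> cls ds i' = i}" unfolding Bin_def by auto
      ultimately have "card ?Bi \<le> card {i'. i' < length ds \<and> cls ds i' = i}"
        by (intro card_inj_on_le) auto
      then show ?thesis using class_card[OF i] i unfolding cb_def by simp
    qed
    have "(\<Sum>i<m_of ds. real (cb \<beta> i) * sizes ds ! i) = (\<Sum>p\<in>Bin \<beta>. ds ! fst p)"
      unfolding sum_by_class[OF finB Bfst] by (rule sum.cong) (auto simp: cb_def)
    then have "(\<Sum>i<m_of ds. real (cb \<beta> i) * sizes ds ! i) \<le> S" using pk3[OF b] by simp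
    then show ?thesis unfolding configs_def using le by (auto simp: cb_def)
  qed
  define x where "x = (\<lambda>a. real (card {\<beta> \<in> {..<N}. cb \<beta> = a}))"
  have img: "cb ` {..<N} \<subseteq> ?C" using cbC by auto
  have fC: "finite ?C" by (rule configs_finite)
  have sumx: "(\<Sum>a\<in>?C. x a) = real N"
  proof -
    have "(\<Sum>a\<in>?C. x a) = (\<Sum>a\<in>?C. \<Sum>\<beta>\<in>{\<beta> \<in> {..<N}. cb \<beta> = a}. (1::real))"
      unfolding x_def by simp
    also have "\<dots> = (\<Sum>\<beta>\<in>{..<N}. (1::real))" by (rule sum.group[OF _ fC img]) simp
    finally show ?thesis by simp
  qed
  have cons: "(\<Sum>a\<in>?C. real (a i) * x a) = real k * real (mult ds i)" if i: "i < m_of ds" for i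
  proof -
    have "(\<Sum>a\<in>?C. real (a i) * x a) = (\<Sum>a\<in>?C. \<Sum>\<beta>\<in>{\<beta> \<in> {..<N}. cb \<beta> = a}. real (cb \<beta> i))"
    proof (rule sum.cong[OF refl])
      fix a assume "a \<in> ?C"
      have "(\<Sum>\<beta>\<in>{\<beta> \<in> {..<N}. cb \<beta> = a}. real (cb \<beta> i)) = (\<Sum>\<beta>\<in>{\<beta> \<in> {..<N}. cb \<beta> = a}. real (a i))"
        by (rule sum.cong) auto
      then show "real (a i) * x a = (\<Sum>\<beta>\<in>{\<beta> \<in> {..<N}. cb \<beta> = a}. real (cb \<beta> i))"
        unfolding x_def by simp
    qed
    also have "\<dots> = (\<Sum>\<beta>\<in>{..<N}. real (cb \<beta> i))" by (rule sum.group[OF _ fC img]) simp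
    also have "\<dots> = real (\<Sum>\<beta>\<in>{..<N}. cb \<beta> i)" by simp
    also have "(\<Sum>\<beta>\<in>{..<N}. cb \<beta> i) = k * mult ds i"
    proof -
      define Ci where "Ci = {i'. i' < length ds \<and> cls ds i' = i} \<times> {..<k}"
      have fCi: "finite Ci" unfolding Ci_def by auto
      have "(\<Sum>\<beta>\<in>{..<N}. cb \<beta> i) = (\<Sum>\<beta>\<in>{..<N}. card {p \<in> Ci. f (fst p) (snd p) = \<beta>})"
      proof (rule sum.cong[OF refl])
        fix \<beta> assume "\<beta> \<in> {..<N}"
        have "{p \<in> Bin \<beta>. cls ds (fst p) = i} = {p \<in> Ci. f (fst p) (snd p) = \<beta>}"
          unfolding Bin_def Ci_def by auto
        then show "cb \<beta> i = card {p \<in> Ci. f (fst p) (snd p) = \<beta>}" unfolding cb_def using i by simp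
      qed
      also have "\<dots> = (\<Sum>\<beta>\<in>{..<N}. \<Sum>p\<in>{p \<in> Ci. f (fst p) (snd p) = \<beta>}. 1)" by simp
      also have "\<dots> = (\<Sum>p\<in>Ci. 1)"
        by (rule sum.group[OF fCi]) (auto simp: Ci_def intro: pk1)
      also have "\<dots> = card Ci" by simp
      also have "\<dots> = k * mult ds i" unfolding Ci_def using class_card[OF i] by (simp add: card_cartesian_product)
      finally show ?thesis .
    qed
    finally show ?thesis by simp
  qed
  have "lp_feasible S ds k x" unfolding lp_feasible_def using cons by (auto simp: x_def)
  then show ?thesis using sumx by blast
qed


lemma vs_concat: "vs (concat (map g xs)) i = sum_list (map (\<lambda>a. vs (g a) i) xs)"
  by (induction xs) auto

lemma vs_replicate: "vs (replicate n a) i = n * a i"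
  by (induction n) auto

lemma opt_upper: assumes feas0: "lp_feasible S ds k x0"
  shows "real (OPT S ds k) \<le> (\<Sum>a\<in>configs S ds. x0 a) + real (m_of ds + k) / 2"
proof -
  let ?C = "configs S ds"
  let ?m = "m_of ds"
  have fC: "finite ?C" by (rule configs_finite)
  obtain x where feas: "lp_feasible S ds k x" and xle: "(\<Sum>a\<in>?C. x a) \<le> (\<Sum>a\<in>?C. x0 a)"
    and supp: "card {a\<in>?C. x a \<noteq> 0} \<le> ?m"
    using reduce[where S=S and ds=ds and k=k and N="card {a\<in>configs S ds. x0 a \<noteq> 0}"] feas0 by blast
  have xnn: "\<And>a. a \<in> ?C \<Longrightarrow> x a \<ge> 0" using feas unfolding lp_feasible_def by auto
  obtain cl where cl: "set cl = ?C" "distinct cl" using finite_distinct_list[OF fC] by blast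
  define fl where "fl = (\<lambda>a. nat \<lfloor>x a\<rfloor>)"
  define fr where "fr = (\<lambda>a. x a - of_int \<lfloor>x a\<rfloor>)"
  have xsplit: "x a = real (fl a) + fr a" if "a \<in> ?C" for a
    using xnn[OF that] unfolding fl_def fr_def by simp
  have fr01: "0 \<le> fr a \<and> fr a < 1" for a unfolding fr_def by linarith
  define L1 where "L1 = concat (map (\<lambda>a. replicate (fl a) a) cl)"
  have vsL1: "vs L1 i = (\<Sum>a\<in>?C. fl a * a i)" for i
    unfolding L1_def vs_concat vs_replicate
    using sum.distinct_set_conv_list[OF cl(2), of "\<lambda>a. fl a * a i"] cl(1) by simp
  have lenL1: "length L1 = (\<Sum>a\<in>?C. fl a)"
    unfolding L1_def using sum.distinct_set_conv_list[OF cl(2), of fl] cl(1)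
    by (simp add: length_concat comp_def)
  have setL1: "set L1 \<subseteq> ?C" unfolding L1_def using cl by auto
  have realeq: "real (vs L1 i) + (\<Sum>a\<in>?C. fr a * real (a i)) = real k * real (mult ds i)"
    if i: "i < ?m" for i
  proof -
    have "real (vs L1 i) + (\<Sum>a\<in>?C. fr a * real (a i)) = (\<Sum>a\<in>?C. real (fl a) * real (a i) + fr a * real (a i))"
      unfolding vsL1 by (simp add: sum.distrib)
    also have "\<dots> = (\<Sum>a\<in>?C. real (a i) * x a)"
      by (rule sum.cong[OF refl]) (simp add: xsplit distrib_left distrib_right mult.commute)
    also have "\<dots> = real k * real (mult ds i)" using feas i unfolding lp_feasible_def by simp
    finally show ?thesis .
  qed
  define r where "r = (\<lambda>i. k * mult ds i - vs L1 i)"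
  have frnn: "(\<Sum>a\<in>?C. fr a * real (a i)) \<ge> 0" for i using fr01 by (intro sum_nonneg) simp
  have rreal: "real (r i) = (\<Sum>a\<in>?C. fr a * real (a i))" if i: "i < ?m" for i
  proof -
    have "real (vs L1 i) \<le> real k * real (mult ds i)" using realeq[OF i] frnn[of i] by linarith
    then have "vs L1 i \<le> k * mult ds i" by (simp add: of_nat_mult[symmetric] del: of_nat_mult)
    then have "real (r i) = real k * real (mult ds i) - real (vs L1 i)" unfolding r_def by (simp add: of_nat_diff)
    then show ?thesis using realeq[OF i] by simp
  qed
  have cover1: "k * mult ds i \<le> vs L1 i + r i" if "i < ?m" for i unfolding r_def by simp
  define F where "F = (\<Sum>a\<in>?C. fr a)"
  have sumx: "(\<Sum>a\<in>?C. x a) = real (length L1) + F"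
    unfolding lenL1 F_def by (simp add: xsplit sum.distrib)
  define L2a where "L2a = filter (\<lambda>a. fr a \<noteq> 0) cl"
  have setA: "set L2a \<subseteq> ?C" unfolding L2a_def using cl by auto
  have lenA: "length L2a \<le> ?m"
  proof -
    have "length L2a = card {a\<in>?C. fr a \<noteq> 0}" unfolding L2a_def using cl
      by (simp add: distinct_length_filter Int_def conj_commute)
    also have "\<dots> \<le> card {a\<in>?C. x a \<noteq> 0}"
      by (rule card_mono) (use fC in \<open>auto simp: fr_def\<close>)
    finally show ?thesis using supp by simp
  qed
  have coverA: "r i \<le> vs L2a i" if i: "i < ?m" for i
  proof -
    have vA: "vs L2a i = (\<Sum>a\<in>{a\<in>?C. fr a \<noteq> 0}. a i)"
      unfolding L2a_def vs_def using cl
      by (simp add: sum.distinct_set_conv_list[symmetric] Int_def conj_commute)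
    have "real (r i) = (\<Sum>a\<in>?C. fr a * real (a i))" by (rule rreal[OF i])
    also have "\<dots> = (\<Sum>a\<in>{a\<in>?C. fr a \<noteq> 0}. fr a * real (a i))"
      by (rule sum.mono_neutral_right[OF fC]) auto
    also have "\<dots> \<le> (\<Sum>a\<in>{a\<in>?C. fr a \<noteq> 0}. real (a i))"
    proof (rule sum_mono)
      fix a assume "a \<in> {a\<in>?C. fr a \<noteq> 0}"
      have "fr a \<le> 1" using fr01[of a] by simp
      then have "fr a * real (a i) \<le> 1 * real (a i)" by (rule mult_right_mono) simp
      then show "fr a * real (a i) \<le> real (a i)" by simp
    qed
    also have "\<dots> = real (vs L2a i)" unfolding vA by simp
    finally show ?thesis by simp
  qed
  have "\<forall>i<?m. r i \<le> k * mult ds i" unfolding r_def by simp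
  then obtain L2b where setB: "set L2b \<subseteq> ?C" and coverB: "\<forall>i<?m. r i \<le> vs L2b i"
    and lenB0: "real (length L2b) * S \<le> 2 * sz ds r + real k * S"
    using residual_pack[OF pos Spos, of k] by blast
  have szr: "sz ds r \<le> S * F"
  proof -
    have "sz ds r = (\<Sum>i<?m. (\<Sum>a\<in>?C. fr a * real (a i)) * sizes ds ! i)"
      unfolding sz_def by (rule sum.cong) (simp_all add: rreal)
    also have "\<dots> = (\<Sum>i<?m. \<Sum>a\<in>?C. fr a * (real (a i) * sizes ds ! i))"
      by (intro sum.cong refl) (simp add: sum_distrib_left sum_distrib_right mult_ac)
    also have "\<dots> = (\<Sum>a\<in>?C. \<Sum>i<?m. fr a * (real (a i) * sizes ds ! i))" by (rule sum.swap)
    also have "\<dots> = (\<Sum>a\<in>?C. fr a * sz ds a)" unfolding sz_def by (simp add: sum_distrib_left)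
    also have "\<dots> \<le> (\<Sum>a\<in>?C. fr a * S)"
    proof (rule sum_mono)
      fix a assume a: "a \<in> ?C"
      have "sz ds a \<le> S" using a unfolding configs_def sz_def by auto
      then show "fr a * sz ds a \<le> fr a * S" using fr01[of a] by (intro mult_left_mono) auto
    qed
    also have "\<dots> = S * F" unfolding F_def by (simp add: sum_distrib_left mult.commute)
    finally show ?thesis .
  qed
  have lenB: "real (length L2b) \<le> 2 * F + real k"
  proof -
    have a1: "2 * sz ds r \<le> 2 * F * S" using szr by (simp add: mult_ac)
    have a2: "(2 * F + real k) * S = 2 * F * S + real k * S" by (simp add: distrib_right)
    have "real (length L2b) * S \<le> (2 * F + real k) * S" using lenB0 a1 a2 by linarith
    then show ?thesis using Spos by simp
  qed
  define L2 where "L2 = (if length L2a \<le> length L2b then L2a else L2b)"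
  have setL2: "set L2 \<subseteq> ?C" unfolding L2_def using setA setB by auto
  have cover2: "r i \<le> vs L2 i" if "i < ?m" for i unfolding L2_def using coverA coverB that by auto
  have lenL2: "real (length L2) \<le> F + real (?m + k) / 2"
  proof -
    have "real (length L2) \<le> real (length L2a)" "real (length L2) \<le> real (length L2b)"
      unfolding L2_def by auto
    moreover have "real (length L2a) \<le> real ?m" using lenA by simp
    moreover have "real (?m + k) = real ?m + real k" by simp
    ultimately have "2 * real (length L2) \<le> real (?m + k) + 2 * F" using lenB by linarith
    then show ?thesis by (simp add: field_simps)
  qed
  define bs where "bs = L1 @ L2"
  have "set bs \<subseteq> ?C" unfolding bs_def using setL1 setL2 by auto
  moreover have "\<forall>i<?m. k * mult ds i \<le> sum_list (map (\<lambda>b. b i) bs)"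
  proof (intro allI impI)
    fix i assume i: "i < ?m"
    have "k * mult ds i \<le> vs bs i" unfolding bs_def using cover1[OF i] cover2[OF i] by simp
    then show "k * mult ds i \<le> sum_list (map (\<lambda>b. b i) bs)" unfolding vs_def .
  qed
  moreover have "\<forall>d\<in>set ds. 0 < d" using pos by auto
  ultimately have "is_k_packing S ds k (length bs) (packf ds bs)" by (rule pack_exists)
  then have "OPT S ds k \<le> length bs" unfolding OPT_def by (intro Least_le) blast
  then have "real (OPT S ds k) \<le> real (length L1) + real (length L2)" unfolding bs_def by simp
  also have "\<dots> \<le> (\<Sum>a\<in>?C. x a) + real (?m + k) / 2" using sumx lenL2 by linarith
  also have "\<dots> \<le> (\<Sum>a\<in>?C. x0 a) + real (?m + k) / 2" using xle by simp
  finally show ?thesis .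
qed

end



theorem lemma11:
  fixes S :: real and ds :: "real list" and k :: nat
  assumes "S > 0"
    and "\<forall>d\<in>set ds. 0 < d \<and> d \<le> S"
    and "k \<ge> 1"
  shows "total_size ds k \<le> S * LIN S ds k
       \<and> S * LIN S ds k \<le> S * real (OPT S ds k)
       \<and> S * real (OPT S ds k) \<le> S * LIN S ds k + S * real (m_of ds + k) / 2"
proof -
  note Spos = assms(1) and pos = assms(2)
  let ?X = "{(\<Sum>a\<in>configs S ds. x a) | x. lp_feasible S ds k x}"
  have "\<forall>i<m_of ds. k * mult ds i \<le> k * mult ds i" by simp
  then obtain L where L: "set L \<subseteq> configs S ds" "\<forall>i<m_of ds. k * mult ds i \<le> vs L i"
    using residual_pack[OF pos Spos, of k, THEN spec[of _ "\<lambda>i. k * mult ds i"]] by auto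
  have "\<forall>d\<in>set ds. 0 < d" using pos by auto
  then have "is_k_packing S ds k (length L) (packf ds L)"
    using pack_exists[OF L(1)] L(2) unfolding vs_def by blast
  then have "\<exists>N f. is_k_packing S ds k N f" by blast
  then have "\<exists>f. is_k_packing S ds k (OPT S ds k) f" unfolding OPT_def
    by (rule LeastI_ex[of "\<lambda>N. \<exists>f. is_k_packing S ds k N f"])
  then obtain f where "is_k_packing S ds k (OPT S ds k) f" by blast
  then obtain x0 where x0: "lp_feasible S ds k x0" "(\<Sum>a\<in>configs S ds. x0 a) = real (OPT S ds k)"
    using pack_to_lp[OF pos Spos] by blast
  have ne: "?X \<noteq> {}" using x0 by blast
  have bdd: "bdd_below ?X"
  proof (rule bdd_belowI[of _ 0])
    fix z assume "z \<in> ?X"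
    then obtain x where "lp_feasible S ds k x" "z = (\<Sum>a\<in>configs S ds. x a)" by blast
    then show "0 \<le> z" unfolding lp_feasible_def by (simp add: sum_nonneg)
  qed
  have LINdef: "LIN S ds k = Inf ?X" unfolding LIN_def by simp
  have p2: "LIN S ds k \<le> real (OPT S ds k)"
    unfolding LINdef using x0 by (intro cInf_lower[OF _ bdd]) (metis (mono_tags, lifting) mem_Collect_eq)
  have p1: "total_size ds k / S \<le> LIN S ds k"
    unfolding LINdef
  proof (rule cInf_greatest[OF ne])
    fix z assume "z \<in> ?X"
    then obtain x where x: "lp_feasible S ds k x" "z = (\<Sum>a\<in>configs S ds. x a)" by blast
    have "total_size ds k \<le> S * z" using lp_lower[OF pos Spos x(1)] x(2) by simp
    then show "total_size ds k / S \<le> z" using Spos by (simp add: divide_le_eq mult.commute)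
  qed
  have p3: "real (OPT S ds k) - real (m_of ds + k) / 2 \<le> LIN S ds k"
    unfolding LINdef
  proof (rule cInf_greatest[OF ne])
    fix z assume "z \<in> ?X"
    then obtain x where x: "lp_feasible S ds k x" "z = (\<Sum>a\<in>configs S ds. x a)" by blast
    show "real (OPT S ds k) - real (m_of ds + k) / 2 \<le> z"
      using opt_upper[OF pos Spos x(1)] x(2) by simp
  qed
  have r1: "total_size ds k \<le> S * LIN S ds k"
    using mult_left_mono[OF p1, of S] Spos by simp
  have r2: "S * LIN S ds k \<le> S * real (OPT S ds k)"
    using mult_left_mono[OF p2, of S] Spos by simp
  have "S * (real (OPT S ds k) - real (m_of ds + k) / 2) \<le> S * LIN S ds k"
    using mult_left_mono[OF p3, of S] Spos by simp
  then have r3: "S * real (OPT S ds k) \<le> S * LIN S ds k + S * real (m_of ds + k) / 2"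
    by (simp add: right_diff_distrib)
  show ?thesis using r1 r2 r3 by blast
qed

end
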